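(* Let $S$ be a semigroup with finite $\mathcal{R}$-height whose kernel is completely simple, and let $A$ be a left ideal of $S$. Let $n$ be the maximum length of a chain of $\mathcal{R}$-classes of $S$ each of which intersects $A$. Then $\mathrm{H}_{\mathcal{R}}(A)\leq 2n-1$.
   Context: For a semigroup $S$, $S^1$ denotes $S$ with an identity adjoined if necessary. Green's preorder: $a\leq_{\mathcal{R}} b$ iff $aS^1\subseteq bS^1$; $\mathcal{R}$ is the associated equivalence. $\mathcal{R}$-classes are ordered by $R_a\leq R_b$ iff $a\leq_{\mathcal{R}} b$, and the $\mathcal{R}$-height $\mathrm{H}_{\mathcal{R}}(S)$ is the supremum of the cardinalities of chains of $\mathcal{R}$-classes. A left ideal is a non-empty subset $A$ with $SA\subseteq A$; $\mathrm{H}_{\mathcal{R}}(A)$ is computed in the semigroup $A$ itself. The kernel of $S$ is its unique minimal ideal. A semigroup is completely simple if it has no proper ideals and has both a minimal right ideal and a minimal left ideal. *)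

theory Defs
  imports Main "HOL-Library.Extended_Nat"
begin

text \<open>A semigroup S is modelled as a type of class semigroup_mult (S = UNIV).
  Notions relative to a subsemigroup T (e.g. a left ideal) are parametrised by the carrier T.\<close>

definition R_le :: "'a::semigroup_mult set \<Rightarrow> 'a \<Rightarrow> 'a \<Rightarrow> bool" where
  "R_le T a b \<longleftrightarrow> a = b \<or> (\<exists>t\<in>T. a = b * t)"   (* a T^1 \<subseteq> b T^1 *)

definition R_eq :: "'a::semigroup_mult set \<Rightarrow> 'a \<Rightarrow> 'a \<Rightarrow> bool" where
  "R_eq T a b \<longleftrightarrow> R_le T a b \<and> R_le T b a"

definition R_class :: "'a::semigroup_mult set \<Rightarrow> 'a \<Rightarrow> 'a set" where
  "R_class T a = {c \<in> T. R_eq T a c}"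

definition R_classes :: "'a::semigroup_mult set \<Rightarrow> 'a set set" where
  "R_classes T = R_class T ` T"

definition R_class_le :: "'a::semigroup_mult set \<Rightarrow> 'a set \<Rightarrow> 'a set \<Rightarrow> bool" where
  "R_class_le T X Y \<longleftrightarrow> (\<exists>a\<in>X. \<exists>b\<in>Y. R_le T a b)"

definition R_chain :: "'a::semigroup_mult set \<Rightarrow> 'a set set \<Rightarrow> bool" where
  "R_chain T C \<longleftrightarrow> C \<subseteq> R_classes T \<and>
     (\<forall>X\<in>C. \<forall>Y\<in>C. R_class_le T X Y \<or> R_class_le T Y X)"

text \<open>R-height: supremum of cardinalities of chains of R-classes (infinite chains give \<infinity>
  via their finite subchains).\<close>
definition R_height :: "'a::semigroup_mult set \<Rightarrow> enat" where
  "R_height T = Sup {enat (card C) | C. finite C \<and> R_chain T C}"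

definition left_ideal_in :: "'a::semigroup_mult set \<Rightarrow> 'a set \<Rightarrow> bool" where
  "left_ideal_in T I \<longleftrightarrow> I \<noteq> {} \<and> I \<subseteq> T \<and> (\<forall>t\<in>T. \<forall>x\<in>I. t * x \<in> I)"

definition right_ideal_in :: "'a::semigroup_mult set \<Rightarrow> 'a set \<Rightarrow> bool" where
  "right_ideal_in T I \<longleftrightarrow> I \<noteq> {} \<and> I \<subseteq> T \<and> (\<forall>t\<in>T. \<forall>x\<in>I. x * t \<in> I)"

definition ideal_in :: "'a::semigroup_mult set \<Rightarrow> 'a set \<Rightarrow> bool" where
  "ideal_in T I \<longleftrightarrow> left_ideal_in T I \<and> right_ideal_in T I"

definition is_kernel :: "'a::semigroup_mult set \<Rightarrow> bool" where
  "is_kernel K \<longleftrightarrow> ideal_in UNIV K \<and> (\<forall>I. ideal_in UNIV I \<longrightarrow> K \<subseteq> I)"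

definition completely_simple :: "'a::semigroup_mult set \<Rightarrow> bool" where
  "completely_simple T \<longleftrightarrow>
     (\<forall>I. ideal_in T I \<longrightarrow> I = T) \<and>
     (\<exists>R. right_ideal_in T R \<and> (\<forall>R'. right_ideal_in T R' \<and> R' \<subseteq> R \<longrightarrow> R' = R)) \<and>
     (\<exists>L. left_ideal_in T L \<and> (\<forall>L'. left_ideal_in T L' \<and> L' \<subseteq> L \<longrightarrow> L' = L))"

end

theory Submission imports Defs begin

lemma principal_min:
  fixes f :: "'a \<Rightarrow> 'a \<Rightarrow> 'a" and K R :: "'a set"
  assumes assoc: "\<And>x y z. f (f x y) z = f x (f y z)"
  and closed: "\<And>x y. x\<in>K \<Longrightarrow> y\<in>K \<Longrightarrow> f x y \<in> K"
  and simple: "\<And>I. I \<noteq> {} \<Longrightarrow> I \<subseteq> K \<Longrightarrow> (\<forall>t\<in>K. \<forall>x\<in>I. f t x \<in> I \<and> f x t \<in> I) \<Longrightarrow> I = K"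
  and Rne: "R \<noteq> {}" and RK: "R \<subseteq> K" and Rid: "\<forall>t\<in>K. \<forall>x\<in>R. f x t \<in> R"
  and Rmin: "\<And>R'. R' \<noteq> {} \<Longrightarrow> R' \<subseteq> R \<Longrightarrow> (\<forall>t\<in>K. \<forall>x\<in>R'. f x t \<in> R') \<Longrightarrow> R' = R"
  and b: "b \<in> K"
  shows "b = f b b \<or> (\<exists>z\<in>K. b = f (f b b) z)"
proof -
  define rid where "rid M \<longleftrightarrow> M \<noteq> {} \<and> M \<subseteq> K \<and> (\<forall>t\<in>K. \<forall>x\<in>M. f x t \<in> M)" for M
  define mrid where "mrid M \<longleftrightarrow> rid M \<and> (\<forall>M'. rid M' \<and> M' \<subseteq> M \<longrightarrow> M' = M)" for M
  have mR: "mrid R" using Rne RK Rid Rmin unfolding mrid_def rid_def by blast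
  have msR: "mrid (f s ` R)" if s: "s \<in> K" for s
  proof -
    have r: "rid (f s ` R)" unfolding rid_def
    proof (intro conjI ballI)
      show "f s ` R \<noteq> {}" using Rne by blast
      show "f s ` R \<subseteq> K" using RK closed s by blast
      fix t x assume "t \<in> K" "x \<in> f s ` R"
      then obtain r where "r \<in> R" "x = f s r" by blast
      then show "f x t \<in> f s ` R" using assoc Rid \<open>t\<in>K\<close> by auto
    qed
    moreover have "M' = f s ` R" if M': "rid M'" "M' \<subseteq> f s ` R" for M'
    proof -
      define R'' where "R'' = {r\<in>R. f s r \<in> M'}"
      have "R'' \<noteq> {}"
      proof -
        obtain m where "m \<in> M'" using M'(1) unfolding rid_def by blast
        then obtain r where "r \<in> R" "m = f s r" using M'(2) by blast
        then show ?thesis using \<open>m \<in> M'\<close> unfolding R''_def by blast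
      qed
      moreover have "\<forall>t\<in>K. \<forall>x\<in>R''. f x t \<in> R''"
      proof (intro ballI)
        fix t x assume t: "t \<in> K" and x: "x \<in> R''"
        have "f s (f x t) = f (f s x) t" using assoc by simp
        also have "\<dots> \<in> M'" using M'(1) t x unfolding rid_def R''_def by blast
        finally show "f x t \<in> R''" using Rid t x unfolding R''_def by blast
      qed
      ultimately have "R'' = R" by (intro Rmin) (auto simp: R''_def)
      then have "f s ` R \<subseteq> M'" unfolding R''_def by blast
      then show ?thesis using M' by blast
    qed
    ultimately show ?thesis unfolding mrid_def by blast
  qed
  define I where "I = R \<union> {f s r | s r. s\<in>K \<and> r\<in>R}"
  have "I = K"
  proof (rule simple)
    show "I \<noteq> {}" using Rne I_def by blast
    show "I \<subseteq> K" using RK closed I_def by blast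
    show "\<forall>t\<in>K. \<forall>x\<in>I. f t x \<in> I \<and> f x t \<in> I"
    proof (intro ballI conjI)
      fix t x assume t: "t\<in>K" and x: "x \<in> I"
      show "f t x \<in> I"
      proof (cases "x \<in> R")
        case True then show ?thesis using t I_def by blast
      next
        case False
        then obtain s r where "s\<in>K" "r\<in>R" "x = f s r" using x I_def by blast
        then show ?thesis using t I_def assoc closed by (metis (mono_tags, lifting) UnI2 mem_Collect_eq)
      qed
      show "f x t \<in> I"
      proof (cases "x \<in> R")
        case True then show ?thesis using t I_def Rid by blast
      next
        case False
        then obtain s r where "s\<in>K" "r\<in>R" "x = f s r" using x I_def by blast
        then show ?thesis using t I_def assoc Rid by (metis (mono_tags, lifting) UnI2 mem_Collect_eq)
      qed
    qed
  qed
  then obtain M where M: "mrid M" "b \<in> M"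
    using b mR msR I_def by blast
  define J2 where "J2 = insert (f b b) (f (f b b) ` K)"
  have "J2 \<subseteq> M"
  proof -
    have "f b t \<in> M" if "t \<in> K" for t using M that unfolding mrid_def rid_def by blast
    then have "f b (f b t) \<in> M" if "t \<in> K" for t using that closed b by blast
    then show ?thesis unfolding J2_def using assoc \<open>b \<in> K\<close> M unfolding mrid_def rid_def by auto
  qed
  moreover have "rid J2" unfolding rid_def J2_def
    using closed b assoc by auto
  ultimately have "J2 = M" using M unfolding mrid_def by blast
  then have "b \<in> J2" using M by blast
  then show ?thesis unfolding J2_def by blast
qed


lemma kernel_right_unit:
  assumes K: "is_kernel K" and cs: "completely_simple K" and A: "left_ideal_in UNIV A"
    and b: "b \<in> K" "b \<in> A"
  shows "\<exists>w\<in>A. b = b * w"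
proof -
  have Kr: "x * t \<in> K" if "x \<in> K" for x t using K that
    unfolding is_kernel_def ideal_in_def right_ideal_in_def by blast
  have Kl: "t * x \<in> K" if "x \<in> K" for x t using K that
    unfolding is_kernel_def ideal_in_def left_ideal_in_def by blast
  have Al: "t * x \<in> A" if "x \<in> A" for x t using A that
    unfolding left_ideal_in_def by blast
  have cs1: "\<forall>I. ideal_in K I \<longrightarrow> I = K" using cs unfolding completely_simple_def by (elim conjE)
  have simp1: "I = K" if "I \<noteq> {}" "I \<subseteq> K" "\<forall>t\<in>K. \<forall>x\<in>I. t * x \<in> I \<and> x * t \<in> I" for I
  proof -
    have "ideal_in K I" using that unfolding ideal_in_def left_ideal_in_def right_ideal_in_def by simp
    then show ?thesis using cs1 by simp
  qed
  have exR: "\<exists>R. right_ideal_in K R \<and> (\<forall>R'. right_ideal_in K R' \<and> R' \<subseteq> R \<longrightarrow> R' = R)"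
    using cs unfolding completely_simple_def by (elim conjE)
  have exL: "\<exists>L. left_ideal_in K L \<and> (\<forall>L'. left_ideal_in K L' \<and> L' \<subseteq> L \<longrightarrow> L' = L)"
    using cs unfolding completely_simple_def by (elim conjE)
  obtain R where R: "right_ideal_in K R" "\<forall>R'. right_ideal_in K R' \<and> R' \<subseteq> R \<longrightarrow> R' = R"
    using exR by blast
  obtain L where L: "left_ideal_in K L" "\<forall>L'. left_ideal_in K L' \<and> L' \<subseteq> L \<longrightarrow> L' = L"
    using exL by blast
  have 1: "b = b * b \<or> (\<exists>z\<in>K. b = (b * b) * z)"
  proof (rule principal_min[where f="(*)" and K=K and R=R])
    show "R \<noteq> {}" "R \<subseteq> K" "\<forall>t\<in>K. \<forall>x\<in>R. x * t \<in> R"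
      using R(1) unfolding right_ideal_in_def by auto
    show "R' = R" if "R' \<noteq> {}" "R' \<subseteq> R" "\<forall>t\<in>K. \<forall>x\<in>R'. x * t \<in> R'" for R'
    proof -
      have "right_ideal_in K R'" using that R(1) unfolding right_ideal_in_def by blast
      then show ?thesis using R(2) that(2) by blast
    qed
    show "I = K" if "I \<noteq> {}" "I \<subseteq> K" "\<forall>t\<in>K. \<forall>x\<in>I. t * x \<in> I \<and> x * t \<in> I" for I
      using simp1 that by blast
  qed (simp_all add: mult.assoc Kr b)
  have 2: "b = b * b \<or> (\<exists>z\<in>K. b = z * (b * b))"
  proof (rule principal_min[where f="\<lambda>x y. y * x" and K=K and R=L])
    show "L \<noteq> {}" "L \<subseteq> K" "\<forall>t\<in>K. \<forall>x\<in>L. t * x \<in> L"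
      using L(1) unfolding left_ideal_in_def by auto
    show "R' = L" if "R' \<noteq> {}" "R' \<subseteq> L" "\<forall>t\<in>K. \<forall>x\<in>R'. t * x \<in> R'" for R'
    proof -
      have "left_ideal_in K R'" using that L(1) unfolding left_ideal_in_def by blast
      then show ?thesis using L(2) that(2) by blast
    qed
    show "I = K" if "I \<noteq> {}" "I \<subseteq> K" "\<forall>t\<in>K. \<forall>x\<in>I. x * t \<in> I \<and> t * x \<in> I" for I
      using simp1 that by blast
  qed (simp_all add: mult.assoc Kr b)
  show ?thesis
  proof (cases "b = b * b")
    case True then show ?thesis using b by blast
  next
    case False
    then obtain z w where z: "b = (b * b) * z" and w: "b = w * (b * b)" using 1 2 by blast
    have "b * z = w * b"
    proof -
      have "b * z = w * (b * b) * z" using w by simp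
      also have "\<dots> = w * ((b * b) * z)" by (simp add: mult.assoc)
      also have "\<dots> = w * b" using z by simp
      finally show ?thesis .
    qed
    then have "b * (z * b) = b"
      by (metis mult.assoc w)
    then show ?thesis using Al b by (metis)
  qed
qed


lemma R_le_refl: "R_le T a a" by (simp add: R_le_def)

lemma R_le_trans:
  assumes cl: "\<forall>x\<in>T. \<forall>y\<in>T. x*y \<in> T" and ab: "R_le T a b" and bc: "R_le T b c"
  shows "R_le T a c"
proof (cases "a = b")
  case True then show ?thesis using bc by simp
next
  case False
  then obtain t where t: "t \<in> T" "a = b * t" using ab unfolding R_le_def by blast
  show ?thesis
  proof (cases "b = c")
    case True then show ?thesis using ab by simp
  next
    case False
    then obtain s where s: "s \<in> T" "b = c * s" using bc unfolding R_le_def by blast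
    have "a = c * (s * t)" using s t by (simp add: mult.assoc)
    moreover have "s * t \<in> T" using cl s t by blast
    ultimately show ?thesis unfolding R_le_def by blast
  qed
qed

lemma R_le_mono: "R_le A a b \<Longrightarrow> R_le UNIV a b" by (auto simp: R_le_def)

lemma in_R_class: "x \<in> T \<Longrightarrow> x \<in> R_class T x"
  by (simp add: R_class_def R_eq_def R_le_refl)

lemma R_class_eq:
  assumes cl: "\<forall>x\<in>T. \<forall>y\<in>T. x*y \<in> T" and x: "x \<in> T" and y: "y \<in> T"
  shows "(R_class T x = R_class T y) = R_eq T x y"
proof
  assume "R_class T x = R_class T y"
  then have "y \<in> R_class T x" using in_R_class[OF y] by simp
  then show "R_eq T x y" by (simp add: R_class_def)
next
  assume xy: "R_eq T x y"
  show "R_class T x = R_class T y"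
    unfolding R_class_def R_eq_def using xy R_le_trans[OF cl] unfolding R_eq_def by blast
qed

lemma R_class_le_iff:
  assumes cl: "\<forall>x\<in>T. \<forall>y\<in>T. x*y \<in> T" and x: "x \<in> T" and y: "y \<in> T"
  shows "R_class_le T (R_class T x) (R_class T y) = R_le T x y"
proof
  assume "R_class_le T (R_class T x) (R_class T y)"
  then obtain a b where "R_eq T x a" "R_eq T y b" "R_le T a b"
    unfolding R_class_le_def R_class_def by blast
  then show "R_le T x y" using R_le_trans[OF cl] unfolding R_eq_def by blast
next
  assume "R_le T x y"
  then show "R_class_le T (R_class T x) (R_class T y)"
    unfolding R_class_le_def using in_R_class x y by blast
qed

lemma keyL:
  assumes A: "\<forall>t. \<forall>x\<in>A. t*x \<in> A" and ba: "R_le UNIV b a" and w: "w \<in> A" "b = b * w"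
  shows "R_le A b a"
proof (cases "b = a")
  case True then show ?thesis by (simp add: R_le_refl)
next
  case False
  then obtain s where s: "b = a * s" using ba unfolding R_le_def by blast
  have "b = a * (s * w)" using s w by (metis mult.assoc)
  moreover have "s * w \<in> A" using A w by blast
  ultimately show ?thesis unfolding R_le_def by blast
qed

lemma finite_min:
  assumes "finite F" "F \<noteq> {}"
    and tot: "\<forall>x\<in>F. \<forall>y\<in>F. r x y \<or> r y x"
    and tr: "\<And>x y z. r x y \<Longrightarrow> r y z \<Longrightarrow> r x z"
  shows "\<exists>m\<in>F. \<forall>x\<in>F. r m x"
  using assms(1,2,3)
proof (induction F rule: finite_ne_induct)
  case (singleton x) then show ?case by auto
next
  case (insert x F)
  then obtain m where m: "m \<in> F" "\<forall>y\<in>F. r m y" by auto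
  show ?case
  proof (cases "r x m")
    case True
    then show ?thesis using m tr insert.prems by auto
  next
    case False
    then have "r m x" using insert.prems m by auto
    then show ?thesis using m by auto
  qed
qed


theorem theorem3p10:
  fixes A :: "'a::semigroup_mult set" and n :: nat
  assumes "R_height (UNIV :: 'a set) < \<infinity>"
    and "\<exists>K :: 'a set. is_kernel K \<and> completely_simple K"
    and "left_ideal_in UNIV A"
    and "Sup {enat (card C) | C. finite C \<and> R_chain (UNIV :: 'a set) C \<and> (\<forall>X\<in>C. X \<inter> A \<noteq> {})} = enat n"
  shows "R_height A \<le> enat (2 * n - 1)"
proof -
  obtain K :: "'a set" where K: "is_kernel K" "completely_simple K" using assms(2) by blast
  have Ane: "A \<noteq> {}" using assms(3) unfolding left_ideal_in_def by blast
  have Al: "\<forall>t. \<forall>x\<in>A. t*x \<in> A" using assms(3) unfolding left_ideal_in_def by blast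
  have clA: "\<forall>x\<in>A. \<forall>y\<in>A. x*y \<in> A" using Al by blast
  have clU: "\<forall>x\<in>(UNIV::'a set). \<forall>y\<in>UNIV. x*y \<in> UNIV" by blast
  have Kr: "x * t \<in> K" if "x \<in> K" for x t using K that
    unfolding is_kernel_def ideal_in_def right_ideal_in_def by blast
  have Kl: "t * x \<in> K" if "x \<in> K" for x t using K that
    unfolding is_kernel_def ideal_in_def left_ideal_in_def by blast
  have Kne: "K \<noteq> {}" using K unfolding is_kernel_def ideal_in_def left_ideal_in_def by blast
  have nbound: "card C \<le> n" if "finite C" "R_chain UNIV C" "\<forall>X\<in>C. X \<inter> A \<noteq> {}" for C :: "'a set set"
  proof -
    have "enat (card C) \<le> Sup {enat (card C) | C. finite C \<and> R_chain (UNIV :: 'a set) C \<and> (\<forall>X\<in>C. X \<inter> A \<noteq> {})}"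
      by (rule Sup_upper) (use that in blast)
    then show ?thesis using assms(4) by simp
  qed
  have main: "card D \<le> 2 * n - 1" if D: "finite D" "R_chain A D" for D
  proof (cases "D = {}")
    case True then show ?thesis by simp
  next
    case Dne: False
    define rep where "rep X = (SOME x. x \<in> A \<and> X = R_class A x)" for X
    have rep: "rep X \<in> A \<and> X = R_class A (rep X)" if "X \<in> D" for X
    proof -
      have "X \<in> R_class A ` A" using D(2) that unfolding R_chain_def R_classes_def by blast
      then have "\<exists>x. x \<in> A \<and> X = R_class A x" by blast
      then show ?thesis unfolding rep_def by (rule someI_ex)
    qed
    have repA: "rep X \<in> A" if "X \<in> D" for X using rep that by blast
    have repX: "R_class A (rep X) = X" if "X \<in> D" for X using rep[OF that] by simp
    have eqD: "(X = Y) = R_eq A (rep X) (rep Y)" if "X \<in> D" "Y \<in> D" for X Y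
    proof -
      have "(R_class A (rep X) = R_class A (rep Y)) = R_eq A (rep X) (rep Y)"
        by (rule R_class_eq[OF clA repA[OF that(1)] repA[OF that(2)]])
      then show ?thesis by (simp only: repX that)
    qed
    have cmp: "R_le A (rep X) (rep Y) \<or> R_le A (rep Y) (rep X)" if "X \<in> D" "Y \<in> D" for X Y
    proof -
      have "R_class_le A X Y \<or> R_class_le A Y X" using D(2) that unfolding R_chain_def by blast
      moreover have "R_class_le A X Y = R_le A (rep X) (rep Y)"
        using R_class_le_iff[OF clA repA[OF that(1)] repA[OF that(2)]] by (simp only: repX that)
      moreover have "R_class_le A Y X = R_le A (rep Y) (rep X)"
        using R_class_le_iff[OF clA repA[OF that(2)] repA[OF that(1)]] by (simp only: repX that)
      ultimately show ?thesis by simp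
    qed
    define ph where "ph X = R_class UNIV (rep X)" for X
    have phEq: "(ph X = ph Y) = R_eq UNIV (rep X) (rep Y)" for X Y
      unfolding ph_def using R_class_eq[OF clU] by blast
    define D2 where "D2 = {X\<in>D. \<exists>Y\<in>D. Y \<noteq> X \<and> ph Y = ph X \<and> R_le A (rep X) (rep Y)}"
    have D2D: "D2 \<subseteq> D" unfolding D2_def by blast
    have fD2: "finite D2" using D(1) D2D finite_subset by blast
    have H: "X = X'" if X: "X \<in> D" and X': "X' \<in> D2" and ph: "ph X = ph X'"
      and le: "R_le A (rep X) (rep X')" for X X'
    proof -
      obtain Y where Y: "Y \<in> D" "Y \<noteq> X'" "ph Y = ph X'" "R_le A (rep X') (rep Y)"
        using X' unfolding D2_def by blast
      have X'D: "X' \<in> D" using X' D2D by blast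
      have "rep X' \<noteq> rep Y" using eqD[OF X'D Y(1)] Y(2) by (auto simp: R_eq_def R_le_refl)
      then obtain u where u: "u \<in> A" "rep X' = rep Y * u" using Y(4) unfolding R_le_def by blast
      have "R_le UNIV (rep Y) (rep X')" using phEq Y(3) unfolding R_eq_def by blast
      then have "rep Y = rep X' \<or> (\<exists>v. rep Y = rep X' * v)" unfolding R_le_def by blast
      then obtain v where v: "rep Y = rep X' * v" using \<open>rep X' \<noteq> rep Y\<close> by metis
      have "rep X' = rep X' * (v * u)" using u v by (metis mult.assoc)
      moreover have "v * u \<in> A" using Al u by blast
      moreover have "R_le UNIV (rep X') (rep X)" using phEq ph unfolding R_eq_def by blast
      ultimately have "R_le A (rep X') (rep X)" using keyL[OF Al] by blast
      then have "R_eq A (rep X) (rep X')" using le unfolding R_eq_def by blast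
      then show ?thesis using eqD[OF X X'D] by blast
    qed
    have inj2: "inj_on ph D2"
    proof (rule inj_onI)
      fix X X' assume a: "X \<in> D2" "X' \<in> D2" "ph X = ph X'"
      have "X \<in> D" "X' \<in> D" using a D2D by auto
      from cmp[OF this] show "X = X'"
      proof
        assume "R_le A (rep X) (rep X')"
        then show ?thesis using H \<open>X \<in> D\<close> a by blast
      next
        assume "R_le A (rep X') (rep X)"
        then have "X' = X" using H[of X' X] \<open>X' \<in> D\<close> a by simp
        then show ?thesis by simp
      qed
    qed
    have inj1: "inj_on ph (D - D2)"
    proof (rule inj_onI)
      fix X X' assume a: "X \<in> D - D2" "X' \<in> D - D2" "ph X = ph X'"
      show "X = X'"
      proof (rule ccontr)
        assume ne: "X \<noteq> X'"
        have XD: "X \<in> D" "X' \<in> D" using a by auto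
        from cmp[OF XD] show False
        proof
          assume "R_le A (rep X) (rep X')"
          then have "X \<in> D2" unfolding D2_def using XD ne a(3) by auto
          then show False using a by blast
        next
          assume "R_le A (rep X') (rep X)"
          then have "X' \<in> D2" unfolding D2_def using XD ne a(3) by auto
          then show False using a by blast
        qed
      qed
    qed
    have "card D = card (D - D2) + card D2"
    proof -
      have "card (D - D2) = card D - card D2" using card_Diff_subset[OF fD2 D2D] .
      moreover have "card D2 \<le> card D" using card_mono[OF D(1) D2D] .
      ultimately show ?thesis by simp
    qed
    also have "card (D - D2) = card (ph ` (D - D2))" using inj1 by (simp add: card_image)
    also have "card D2 = card (ph ` D2)" using inj2 by (simp add: card_image)
    also have "card (ph ` (D - D2)) \<le> card (ph ` D)"
      by (rule card_mono) (use D(1) in auto)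
    finally have cD: "card D \<le> card (ph ` D) + card (ph ` D2)" by simp
    have phcls: "ph X \<in> R_classes UNIV" for X unfolding ph_def R_classes_def by blast
    have phA: "ph X \<inter> A \<noteq> {}" if "X \<in> D" for X
      using repA[OF that] in_R_class[of "rep X" UNIV] unfolding ph_def by blast
    have phle: "R_class_le UNIV (ph X) (ph Y) \<or> R_class_le UNIV (ph Y) (ph X)"
      if "X \<in> D" "Y \<in> D" for X Y
    proof -
      have i: "R_class_le UNIV (ph X) (ph Y) = R_le UNIV (rep X) (rep Y)" for X Y
        unfolding ph_def by (rule R_class_le_iff[OF clU]) auto
      show ?thesis using cmp[OF that] R_le_mono unfolding i by blast
    qed
    have ch1: "R_chain UNIV (ph ` D)" unfolding R_chain_def using phcls phle by blast
    have c1: "card (ph ` D) \<le> n" using nbound[of "ph ` D"] ch1 phA D(1) by blast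
    have "\<exists>m\<in>rep ` D. \<forall>x\<in>rep ` D. R_le A m x"
    proof (rule finite_min)
      show "finite (rep ` D)" using D(1) by simp
      show "rep ` D \<noteq> {}" using Dne by simp
      show "\<forall>x\<in>rep ` D. \<forall>y\<in>rep ` D. R_le A x y \<or> R_le A y x" using cmp by blast
      show "R_le A x z" if "R_le A x y" "R_le A y z" for x y z using R_le_trans[OF clA] that by blast
    qed
    then obtain x0 where x0: "x0 \<in> rep ` D" "\<forall>x\<in>rep ` D. R_le A x0 x" by blast
    have x0A: "x0 \<in> A" using x0 repA by blast
    obtain kk where kk: "kk \<in> K" using Kne by blast
    obtain a where a: "a \<in> A" using Ane by blast
    define k where "k = x0 * (kk * a)"
    have kK: "k \<in> K" unfolding k_def using Kl Kr kk by blast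
    have kA: "k \<in> A" unfolding k_def using Al a by blast
    have kle: "R_le UNIV k (rep X)" if "X \<in> D" for X
    proof -
      have "R_le UNIV k x0" unfolding k_def R_le_def by blast
      moreover have "R_le UNIV x0 (rep X)" using x0 that R_le_mono by blast
      ultimately show ?thesis using R_le_trans[OF clU] by blast
    qed
    define Rk where "Rk = R_class UNIV k"
    have Rk_notin: "Rk \<notin> ph ` D2"
    proof
      assume "Rk \<in> ph ` D2"
      then obtain X where X: "X \<in> D2" "ph X = Rk" by blast
      obtain Y where Y: "Y \<in> D" "Y \<noteq> X" "ph Y = ph X" "R_le A (rep X) (rep Y)"
        using X unfolding D2_def by blast
      have "R_class UNIV (rep Y) = R_class UNIV k" using X(2) Y(3) unfolding Rk_def ph_def by simp
      moreover have "(R_class UNIV (rep Y) = R_class UNIV k) = R_eq UNIV (rep Y) k"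
        by (rule R_class_eq[OF clU]) auto
      ultimately have "R_eq UNIV (rep Y) k" by simp
      then have "R_le UNIV (rep Y) k" unfolding R_eq_def by blast
      then have "rep Y = k \<or> (\<exists>t. rep Y = k * t)" unfolding R_le_def by blast
      then have "rep Y \<in> K" using kK Kr by auto
      then obtain w where w: "w \<in> A" "rep Y = rep Y * w"
        using kernel_right_unit[OF K assms(3)] repA[OF Y(1)] by blast
      have "R_le UNIV (rep Y) (rep X)" using Y(3) phEq unfolding R_eq_def by blast
      then have "R_le A (rep Y) (rep X)" using keyL[OF Al _ w] by blast
      then have "R_eq A (rep X) (rep Y)" using Y(4) unfolding R_eq_def by blast
      then show False using eqD[of X Y] X(1) D2D Y(1,2) by blast
    qed
    have RkA: "Rk \<inter> A \<noteq> {}" using kA in_R_class[of k UNIV] unfolding Rk_def by blast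
    have ch2: "R_chain UNIV (insert Rk (ph ` D2))"
      unfolding R_chain_def
    proof (intro conjI ballI)
      show "insert Rk (ph ` D2) \<subseteq> R_classes UNIV"
        using phcls unfolding Rk_def R_classes_def by blast
      fix X Y assume XY: "X \<in> insert Rk (ph ` D2)" "Y \<in> insert Rk (ph ` D2)"
      have Rkle: "R_class_le UNIV Rk (ph Z)" if "Z \<in> D" for Z
        using kle[OF that] R_class_le_iff[OF clU] unfolding Rk_def ph_def by blast
      have RkRk: "R_class_le UNIV Rk Rk" unfolding Rk_def using R_class_le_iff[OF clU, of k k] R_le_refl by simp
      show "R_class_le UNIV X Y \<or> R_class_le UNIV Y X"
      proof (cases "X = Rk")
        case True
        then show ?thesis
        proof (cases "Y = Rk")
          case True then show ?thesis using RkRk \<open>X = Rk\<close> by simp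
        next
          case False
          then obtain Z where "Z \<in> D2" "Y = ph Z" using XY by blast
          then show ?thesis using Rkle D2D True by blast
        qed
      next
        case False
        then obtain Z where Z: "Z \<in> D2" "X = ph Z" using XY by blast
        show ?thesis
        proof (cases "Y = Rk")
          case True then show ?thesis using Rkle D2D Z by blast
        next
          case False
          then obtain Z' where "Z' \<in> D2" "Y = ph Z'" using XY by blast
          then show ?thesis using phle D2D Z by blast
        qed
      qed
    qed
    have "card (insert Rk (ph ` D2)) \<le> n"
      using nbound[OF _ ch2] fD2 RkA phA D2D by blast
    then have c2: "card (ph ` D2) + 1 \<le> n" using Rk_notin fD2 by simp
    show ?thesis using cD c1 c2 by linarith
  qed
  show ?thesis unfolding R_height_def
  proof (rule Sup_least)
    fix e assume "e \<in> {enat (card C) |C. finite C \<and> R_chain A C}"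
    then obtain C where "e = enat (card C)" "finite C" "R_chain A C" by blast
    then show "e \<le> enat (2 * n - 1)" using main by simp
  qed
qed

end
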